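(* Assume conditions (A1)–(A5) below. Then for almost every $\omega\in\Omega$ there exists a constant $\hat\rho(\omega)>0$ such that the map $\theta\mapsto\max_{W\in\mathcal W}F(W,H(\theta,\omega))$ is $\hat\rho(\omega)$-weakly convex on $\Theta$.
   Context: Let $(\Xi,\mathscr F,P)$ be a complete probability space and $\omega:\Xi\to\Omega$ a random element; $\mathcal Z_p$ is the space of measurable real functions of $\omega$ with finite $p$-th absolute moment. Let $S,M_U$ be positive integers, $\Theta\subset\mathbb R^S$, $\mathcal W\subset\mathbb C^{M_U}$, $F:\mathbb C^{M_U}\times\mathbb C^{M_U}\to\mathbb R$, $H:\mathcal U\times\Omega\to\mathbb C^{M_U}$ with $\mathcal U\supset\Theta$ open. A function $g$ is $\rho$-weakly convex (resp. concave) on a set if $g+\frac\rho2\|\cdot\|^2$ (resp. $-g+\frac\rho2\|\cdot\|^2$) is convex there. Conditions: (A1) $F$ is twice continuously real-differentiable; (A2) $\Theta,\mathcal W$ compact, $\Theta$ convex; (A3) there are constants $B_H,L_{H,0},L_{H,1}$ such that for a.e. $\omega$, $H(\cdot,\omega)$ is bounded by $B_H$ on $\Theta$, twice continuously differentiable on $\mathcal U$, $L_{H,0}$-Lipschitz with $L_{H,1}$-Lipschitz gradient on $\Theta$; (A4) there is a positive $\tilde\rho\in\mathcal Z_1$ such that for a.e. $\omega$, $\theta\mapsto\max_{W\in\mathcal W}F(W,H(\theta,\omega))$ is $\tilde\rho(\omega)$-weakly concave on $\Theta$; (A5) for all $\theta\in\Theta$ and any maximizer $W^*(\theta,\omega)\in\arg\max_{W\in\mathcal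 W}F(W,H(\theta,\omega))$, $\omega\mapsto F(W^*(\theta,\omega),H(\theta,\omega))$ is in $\mathcal Z_2$ and bounded below, and i.i.d. samples of $\omega$ can be drawn. *)

theory Defs
  imports "HOL-Probability.Probability"
begin

definition weakly_convex_on :: "real \<Rightarrow> 'a::real_normed_vector set \<Rightarrow> ('a \<Rightarrow> real) \<Rightarrow> bool" where
  "weakly_convex_on \<rho> S g \<longleftrightarrow> convex_on S (\<lambda>x. g x + \<rho> / 2 * (norm x)^2)"

definition weakly_concave_on :: "real \<Rightarrow> 'a::real_normed_vector set \<Rightarrow> ('a \<Rightarrow> real) \<Rightarrow> bool" where
  "weakly_concave_on \<rho> S g \<longleftrightarrow> convex_on S (\<lambda>x. - g x + \<rho> / 2 * (norm x)^2)"

definition C2_on :: "'a::real_normed_vector set \<Rightarrow> ('a \<Rightarrow> 'b::real_normed_vector) \<Rightarrow> bool" where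
  "C2_on U f \<longleftrightarrow> (\<exists>f' f''.
      (\<forall>x\<in>U. (f has_derivative blinfun_apply (f' x)) (at x)
             \<and> (f' has_derivative blinfun_apply (f'' x)) (at x))
      \<and> continuous_on U f'')"

end

theory Submission
  imports Defs
begin

lemma descent:
  fixes \<phi> :: "'a::real_normed_vector \<Rightarrow> real"
  assumes S: "convex S"
    and der: "\<And>x. x \<in> S \<Longrightarrow> (\<phi> has_derivative D x) (at x)"
    and bnd: "\<And>x y d. x \<in> S \<Longrightarrow> y \<in> S \<Longrightarrow> \<bar>D y d - D x d\<bar> \<le> L * norm (y - x) * norm d"
    and x: "x \<in> S" and z: "z \<in> S"
  shows "\<phi> z + D z (x - z) - L / 2 * (norm (x - z))^2 \<le> \<phi> x"
proof -
  define d where "d = x - z"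
  define h where "h s = \<phi> (z + s *\<^sub>R d) - s * D z d + L / 2 * s^2 * (norm d)^2" for s
  define h' where "h' s = D (z + s *\<^sub>R d) d - D z d + L * s * (norm d)^2" for s
  have inS: "z + s *\<^sub>R d \<in> S" if "s \<in> {0..1}" for s
  proof -
    have "z + s *\<^sub>R d = (1 - s) *\<^sub>R z + s *\<^sub>R x" by (simp add: d_def algebra_simps)
    thus ?thesis using that S x z by (auto intro: convexD)
  qed
  have lin: "linear (D p)" if "p \<in> S" for p
    using der[OF that] has_derivative_linear by blast
  have hd: "(h has_real_derivative h' s) (at s)" if "s \<in> {0..1}" for s
  proof -
    have d1: "((\<lambda>s. z + s *\<^sub>R d) has_derivative (\<lambda>t. t *\<^sub>R d)) (at s)"
      by (auto intro!: derivative_eq_intros)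
    have d2: "((\<lambda>s. \<phi> (z + s *\<^sub>R d)) has_derivative (\<lambda>t. D (z + s *\<^sub>R d) (t *\<^sub>R d))) (at s)"
      using has_derivative_compose[OF d1 der[OF inS[OF that]]] .
    have eq: "(\<lambda>t. D (z + s *\<^sub>R d) (t *\<^sub>R d)) = (\<lambda>t. t * D (z + s *\<^sub>R d) d)"
      using linear_scale[OF lin[OF inS[OF that]]] by auto
    have "(h has_derivative (\<lambda>t. t * D (z + s *\<^sub>R d) d - t * D z d + L / 2 * (2 * s * t) * (norm d)^2)) (at s)"
      unfolding h_def using d2[unfolded eq]
      by (auto intro!: derivative_eq_intros simp: power2_eq_square)
    moreover have "(\<lambda>t. t * D (z + s *\<^sub>R d) d - t * D z d + L / 2 * (2 * s * t) * (norm d)^2) = (*) (h' s)"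
      unfolding h'_def by (rule ext) (simp add: algebra_simps)
    ultimately show ?thesis unfolding has_field_derivative_def by simp
  qed
  have hnn: "h' s \<ge> 0" if "s \<in> {0..1}" for s
  proof -
    have "\<bar>D (z + s *\<^sub>R d) d - D z d\<bar> \<le> L * norm (z + s *\<^sub>R d - z) * norm d"
      using bnd[OF z inS[OF that]] .
    also have "\<dots> = L * s * (norm d)^2" using that by (simp add: power2_eq_square)
    finally show ?thesis unfolding h'_def by linarith
  qed
  have "h 0 \<le> h 1" by (rule deriv_nonneg_imp_mono[of 0 1 h h']) (use hd hnn in auto)
  then show ?thesis unfolding h_def d_def by simp
qed

lemma norm_comb_identity:
  fixes x y :: "'a::real_inner"
  assumes "u + v = 1"
  shows "u * (norm x)^2 + v * (norm y)^2 = (norm (u *\<^sub>R x + v *\<^sub>R y))^2 + u * v * (norm (x - y))^2"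
proof -
  have v: "v = 1 - u" using assms by simp
  show ?thesis unfolding v power2_norm_eq_inner
    by (simp add: inner_diff_left inner_diff_right inner_add_left inner_add_right inner_commute algebra_simps power2_eq_square)
qed

lemma wconv_from_deriv:
  fixes \<phi> :: "'a::real_inner \<Rightarrow> real"
  assumes S: "convex S"
    and der: "\<And>x. x \<in> S \<Longrightarrow> (\<phi> has_derivative D x) (at x)"
    and bnd: "\<And>x y d. x \<in> S \<Longrightarrow> y \<in> S \<Longrightarrow> \<bar>D y d - D x d\<bar> \<le> L * norm (y - x) * norm d"
  shows "convex_on S (\<lambda>x. \<phi> x + L / 2 * (norm x)^2)"
  unfolding convex_on_def
proof (intro conjI S ballI allI impI)
  fix x y :: 'a and u v :: real
  assume x: "x \<in> S" and y: "y \<in> S" and u: "0 \<le> u" and v: "0 \<le> v" and uv: "u + v = 1"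
  define z where "z = u *\<^sub>R x + v *\<^sub>R y"
  have z: "z \<in> S" unfolding z_def using S x y u v uv by (auto intro: convexD)
  have lin: "linear (D z)" using der[OF z] has_derivative_linear by blast
  have ueq: "u = 1 - v" using uv by simp
  have xz: "x - z = v *\<^sub>R (x - y)" unfolding z_def ueq
    by (simp add: scaleR_diff_left scaleR_diff_right)
  have yz: "y - z = (- u) *\<^sub>R (x - y)" unfolding z_def ueq
    by (simp add: scaleR_diff_left scaleR_diff_right)
  have e1: "\<phi> z + v * D z (x - y) - L / 2 * (v^2 * (norm (x - y))^2) \<le> \<phi> x"
    using descent[OF S der bnd x z] unfolding xz linear_scale[OF lin] by (simp add: power_mult_distrib)
  have e2: "\<phi> z - u * D z (x - y) - L / 2 * (u^2 * (norm (x - y))^2) \<le> \<phi> y"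
    using descent[OF S der bnd y z] unfolding yz linear_scale[OF lin] by (simp add: power_mult_distrib)
  have id: "u * (norm x)^2 + v * (norm y)^2 = (norm z)^2 + u * v * (norm (x - y))^2"
    unfolding z_def by (rule norm_comb_identity[OF uv])
  have "u * e + v * f \<ge> u * a + v * b" if "a \<le> e" "b \<le> f" for a b e f
    using that u v by (simp add: add_mono mult_left_mono)
  from this[OF e1 e2]
  have "u * \<phi> x + v * \<phi> y \<ge> \<phi> z - L / 2 * (u * v * (norm (x - y))^2)"
  proof -
    assume h: "u * (\<phi> z + v * D z (x - y) - L / 2 * (v\<^sup>2 * (norm (x - y))\<^sup>2)) +
          v * (\<phi> z - u * D z (x - y) - L / 2 * (u\<^sup>2 * (norm (x - y))\<^sup>2)) \<le> u * \<phi> x + v * \<phi> y"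
    have "u * (\<phi> z + v * D z (x - y) - L / 2 * (v\<^sup>2 * (norm (x - y))\<^sup>2)) +
          v * (\<phi> z - u * D z (x - y) - L / 2 * (u\<^sup>2 * (norm (x - y))\<^sup>2))
        = (u + v) * \<phi> z - L / 2 * (u * v * (u + v) * (norm (x - y))^2)"
      by (simp add: algebra_simps power2_eq_square)
    with h uv show ?thesis by simp
  qed
  note prev = this
  have "u * (\<phi> x + L / 2 * (norm x)^2) + v * (\<phi> y + L / 2 * (norm y)^2)
      = (u * \<phi> x + v * \<phi> y) + L / 2 * (u * (norm x)^2 + v * (norm y)^2)"
    by (simp add: algebra_simps)
  also have "\<dots> = (u * \<phi> x + v * \<phi> y) + (L / 2 * (norm z)^2 + L / 2 * (u * v * (norm (x - y))^2))"
    unfolding id by (simp add: distrib_left)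
  finally show "\<phi> (u *\<^sub>R x + v *\<^sub>R y) + L / 2 * (norm (u *\<^sub>R x + v *\<^sub>R y))^2
      \<le> u * (\<phi> x + L / 2 * (norm x)^2) + v * (\<phi> y + L / 2 * (norm y)^2)"
    unfolding z_def[symmetric] using prev by linarith
qed

lemma convex_on_SUP_family:
  fixes \<phi> :: "'i \<Rightarrow> 'a::real_vector \<Rightarrow> real"
  assumes ne: "I \<noteq> {}"
    and cv: "\<And>i. i \<in> I \<Longrightarrow> convex_on S (\<lambda>x. \<phi> i x + q x)"
    and bdd: "\<And>x. x \<in> S \<Longrightarrow> bdd_above ((\<lambda>i. \<phi> i x) ` I)"
    and S: "convex S"
  shows "convex_on S (\<lambda>x. (SUP i\<in>I. \<phi> i x) + q x)"
  unfolding convex_on_def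
proof (intro conjI S ballI allI impI)
  fix x y :: 'a and u v :: real
  assume x: "x \<in> S" and y: "y \<in> S" and u: "0 \<le> u" and v: "0 \<le> v" and uv: "u + v = 1"
  define z where "z = u *\<^sub>R x + v *\<^sub>R y"
  have "\<phi> i z \<le> u * ((SUP i\<in>I. \<phi> i x) + q x) + v * ((SUP i\<in>I. \<phi> i y) + q y) - q z" if i: "i \<in> I" for i
  proof -
    have "\<phi> i z + q z \<le> u * (\<phi> i x + q x) + v * (\<phi> i y + q y)"
      using cv[OF i] x y u v uv unfolding convex_on_def z_def by blast
    moreover have "\<phi> i x \<le> (SUP i\<in>I. \<phi> i x)" using cSUP_upper[OF i bdd[OF x]] .
    moreover have "\<phi> i y \<le> (SUP i\<in>I. \<phi> i y)" using cSUP_upper[OF i bdd[OF y]] .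
    ultimately show ?thesis using mult_left_mono[OF _ u, of "\<phi> i x" "(SUP i\<in>I. \<phi> i x)"]
        mult_left_mono[OF _ v, of "\<phi> i y" "(SUP i\<in>I. \<phi> i y)"]
      by (simp add: algebra_simps)
  qed
  then have "(SUP i\<in>I. \<phi> i z) \<le> u * ((SUP i\<in>I. \<phi> i x) + q x) + v * ((SUP i\<in>I. \<phi> i y) + q y) - q z"
    using ne by (intro cSUP_least) auto
  then show "(SUP i\<in>I. \<phi> i (u *\<^sub>R x + v *\<^sub>R y)) + q (u *\<^sub>R x + v *\<^sub>R y)
      \<le> u * ((SUP i\<in>I. \<phi> i x) + q x) + v * ((SUP i\<in>I. \<phi> i y) + q y)"
    unfolding z_def by simp
qed

theorem lemma3:
  fixes P :: "'x measure"
    and M\<Omega> :: "'o measure"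
    and \<omega> :: "'x \<Rightarrow> 'o"
    and \<Theta> :: "(real ^ 's) set"
    and U :: "(real ^ 's) set"
    and \<W> :: "(complex ^ 'm) set"
    and F :: "(complex ^ 'm) \<times> (complex ^ 'm) \<Rightarrow> real"
    and H :: "real ^ 's \<Rightarrow> 'o \<Rightarrow> complex ^ 'm"
    and B_H L_H0 L_H1 :: real
    and \<rho>t :: "'o \<Rightarrow> real"
  assumes prob: "prob_space P"
    and complete: "complete_measure P"
    and rand_elem: "\<omega> \<in> measurable P M\<Omega>"
    \<comment> \<open>(A1)\<close>
    and A1: "C2_on UNIV F"
    \<comment> \<open>(A2)\<close>
    and A2_Theta: "compact \<Theta>" "convex \<Theta>"
    and A2_W: "compact \<W>" "\<W> \<noteq> {}"
    \<comment> \<open>(A3)\<close>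
    and U_open: "open U" and Theta_sub: "\<Theta> \<subseteq> U"
    and A3: "AE \<xi> in P.
       (\<forall>\<theta>\<in>\<Theta>. norm (H \<theta> (\<omega> \<xi>)) \<le> B_H)
     \<and> C2_on U (\<lambda>\<theta>. H \<theta> (\<omega> \<xi>))
     \<and> L_H0-lipschitz_on \<Theta> (\<lambda>\<theta>. H \<theta> (\<omega> \<xi>))
     \<and> (\<exists>H'. (\<forall>\<theta>\<in>U. ((\<lambda>\<theta>. H \<theta> (\<omega> \<xi>)) has_derivative blinfun_apply (H' \<theta>)) (at \<theta>))
              \<and> L_H1-lipschitz_on \<Theta> H')"
    \<comment> \<open>(A4)\<close>
    and A4_meas: "\<rho>t \<in> borel_measurable M\<Omega>"
    and A4_pos: "\<forall>w. \<rho>t w > 0"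
    and A4_int: "integrable P (\<lambda>\<xi>. \<rho>t (\<omega> \<xi>))"
    and A4: "AE \<xi> in P. weakly_concave_on (\<rho>t (\<omega> \<xi>)) \<Theta>
                (\<lambda>\<theta>. SUP W\<in>\<W>. F (W, H \<theta> (\<omega> \<xi>)))"
    \<comment> \<open>(A5)\<close>
    and A5: "\<forall>\<theta>\<in>\<Theta>. \<forall>Wstar :: 'o \<Rightarrow> complex ^ 'm.
       (\<forall>w. Wstar w \<in> \<W> \<and> (\<forall>W\<in>\<W>. F (W, H \<theta> w) \<le> F (Wstar w, H \<theta> w))) \<longrightarrow>
         (\<lambda>w. F (Wstar w, H \<theta> w)) \<in> borel_measurable M\<Omega>
       \<and> integrable P (\<lambda>\<xi>. (F (Wstar (\<omega> \<xi>), H \<theta> (\<omega> \<xi>)))^2)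
       \<and> (\<exists>c. \<forall>w. c \<le> F (Wstar w, H \<theta> w))"
  shows "AE \<xi> in P. \<exists>\<rho>h > 0. weakly_convex_on \<rho>h \<Theta>
            (\<lambda>\<theta>. SUP W\<in>\<W>. F (W, H \<theta> (\<omega> \<xi>)))"
proof -
  obtain F' F'' where FD: "\<And>x. (F has_derivative blinfun_apply (F' x)) (at x)"
      and FD2: "\<And>x. (F' has_derivative blinfun_apply (F'' x)) (at x)"
      and F''c: "continuous_on UNIV F''"
    using A1 unfolding C2_on_def by blast
  obtain RW where RW: "\<And>W. W \<in> \<W> \<Longrightarrow> norm W \<le> RW"
    using compact_imp_bounded[OF A2_W(1)] unfolding bounded_iff by blast
  define R where "R = RW + max 0 B_H"
  define C where "C = cball (0 :: (complex ^ 'm) \<times> (complex ^ 'm)) R"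
  have Ccomp: "compact C" and Cconv: "convex C" unfolding C_def by auto
  have Fc: "continuous_on UNIV F"
    by (rule continuous_at_imp_continuous_on) (use has_derivative_continuous[OF FD] in blast)
  have F'c: "continuous_on UNIV F'"
    by (rule continuous_at_imp_continuous_on) (use has_derivative_continuous[OF FD2] in blast)
  obtain KF0 where KF0: "\<And>p. p \<in> C \<Longrightarrow> norm (F p) \<le> KF0"
    using compact_imp_bounded[OF compact_continuous_image[OF continuous_on_subset[OF Fc] Ccomp]]
    unfolding bounded_iff by auto
  obtain KF where KFpos: "KF > 0" and KF: "\<And>p. p \<in> C \<Longrightarrow> norm (F' p) \<le> KF"
    using compact_imp_bounded[OF compact_continuous_image[OF continuous_on_subset[OF F'c] Ccomp]]
    unfolding bounded_pos by auto
  obtain K2 where K2pos: "K2 > 0" and K2: "\<And>p. p \<in> C \<Longrightarrow> norm (F'' p) \<le> K2"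
    using compact_imp_bounded[OF compact_continuous_image[OF continuous_on_subset[OF F''c] Ccomp]]
    unfolding bounded_pos by auto
  have F'lip: "norm (F' p - F' q) \<le> K2 * norm (p - q)" if "p \<in> C" "q \<in> C" for p q
  proof (rule differentiable_bound[OF Cconv _ _ that])
    show "(F' has_derivative blinfun_apply (F'' x)) (at x within C)" for x
      using FD2 by (rule has_derivative_at_withinI)
    show "onorm (blinfun_apply (F'' x)) \<le> K2" if "x \<in> C" for x
      using K2[OF that] by (simp add: norm_blinfun.rep_eq)
  qed
  show ?thesis
    using A3
  proof (rule AE_mp, intro AE_I2 impI)
    fix \<xi>
    define w where "w = \<omega> \<xi>"
    define h where "h \<theta> = H \<theta> w" for \<theta>
    assume asm: "(\<forall>\<theta>\<in>\<Theta>. norm (H \<theta> (\<omega> \<xi>)) \<le> B_H)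
     \<and> C2_on U (\<lambda>\<theta>. H \<theta> (\<omega> \<xi>))
     \<and> L_H0-lipschitz_on \<Theta> (\<lambda>\<theta>. H \<theta> (\<omega> \<xi>))
     \<and> (\<exists>H'. (\<forall>\<theta>\<in>U. ((\<lambda>\<theta>. H \<theta> (\<omega> \<xi>)) has_derivative blinfun_apply (H' \<theta>)) (at \<theta>))
              \<and> L_H1-lipschitz_on \<Theta> H')"
    then have hB: "\<And>\<theta>. \<theta> \<in> \<Theta> \<Longrightarrow> norm (h \<theta>) \<le> B_H"
      and hL: "L_H0-lipschitz_on \<Theta> h"
      unfolding h_def w_def by auto
    from asm obtain H' where hD: "\<And>\<theta>. \<theta> \<in> U \<Longrightarrow> (h has_derivative blinfun_apply (H' \<theta>)) (at \<theta>)"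
      and H'L: "L_H1-lipschitz_on \<Theta> H'"
      unfolding h_def w_def by blast
    obtain Kh where Khpos: "Kh > 0" and Kh: "\<And>\<theta>. \<theta> \<in> \<Theta> \<Longrightarrow> norm (H' \<theta>) \<le> Kh"
      using compact_imp_bounded[OF compact_continuous_image[OF lipschitz_on_continuous_on[OF H'L] A2_Theta(1)]]
      unfolding bounded_pos by auto
    have L0: "L_H0 \<ge> 0" and L1: "L_H1 \<ge> 0" using hL H'L by (auto simp: lipschitz_on_def)
    define L where "L = K2 * L_H0 * Kh + KF * L_H1 + 1"
    have Lpos: "L > 0" unfolding L_def using K2pos Khpos KFpos L0 L1 by (simp add: add_nonneg_pos)
    have inC: "(W, h \<theta>) \<in> C" if "W \<in> \<W>" "\<theta> \<in> \<Theta>" for W \<theta>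
    proof -
      have "norm (W, h \<theta>) \<le> norm W + norm (h \<theta>)" by (rule norm_Pair_le)
      also have "\<dots> \<le> R" unfolding R_def using RW[OF that(1)] hB[OF that(2)] by linarith
      finally show ?thesis unfolding C_def by simp
    qed
    define D where "D W \<theta> d = blinfun_apply (F' (W, h \<theta>)) (0, blinfun_apply (H' \<theta>) d)" for W \<theta> d
    have cvW: "convex_on \<Theta> (\<lambda>\<theta>. F (W, h \<theta>) + L / 2 * (norm \<theta>)^2)" if W: "W \<in> \<W>" for W
    proof (rule wconv_from_deriv[OF A2_Theta(2), of _ "D W"])
      show "((\<lambda>\<theta>. F (W, h \<theta>)) has_derivative D W x) (at x)" if x: "x \<in> \<Theta>" for x
      proof -
        have "((\<lambda>\<theta>. (W, h \<theta>)) has_derivative (\<lambda>d. (0, blinfun_apply (H' x) d))) (at x)"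
          using x Theta_sub by (auto intro!: has_derivative_Pair hD)
        from has_derivative_compose[OF this FD]
        show ?thesis unfolding D_def by (simp add: fun_eq_iff)
      qed
      show "\<bar>D W y d - D W x d\<bar> \<le> L * norm (y - x) * norm d"
        if x: "x \<in> \<Theta>" and y: "y \<in> \<Theta>" for x y d
      proof -
        have eq: "D W y d - D W x d = blinfun_apply (F' (W, h y) - F' (W, h x)) (0, blinfun_apply (H' y) d)
             + blinfun_apply (F' (W, h x)) (0, blinfun_apply (H' y - H' x) d)"
        proof -
          have pd: "blinfun_apply G (0, a - b) = blinfun_apply G (0, a) - blinfun_apply G (0, b)"
            for G :: "((complex ^ 'm) \<times> (complex ^ 'm)) \<Rightarrow>\<^sub>L real" and a b :: "complex ^ 'm"
            using blinfun.diff_right[of G "(0, a)" "(0, b)"] by simp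
          show ?thesis unfolding D_def by (simp add: blinfun.diff_left pd)
        qed
        have n1: "norm (blinfun_apply (F' (W, h y) - F' (W, h x)) (0, blinfun_apply (H' y) d))
            \<le> (K2 * L_H0 * norm (y - x)) * (Kh * norm d)"
        proof -
          have "norm (blinfun_apply (F' (W, h y) - F' (W, h x)) (0, blinfun_apply (H' y) d))
              \<le> norm (F' (W, h y) - F' (W, h x)) * norm (blinfun_apply (H' y) d)"
            using norm_blinfun[of "F' (W, h y) - F' (W, h x)" "(0, blinfun_apply (H' y) d)"] by simp
          also have "\<dots> \<le> (K2 * L_H0 * norm (y - x)) * (Kh * norm d)"
          proof (rule mult_mono)
            have "norm (F' (W, h y) - F' (W, h x)) \<le> K2 * norm ((W, h y) - (W, h x))"
              using F'lip[OF inC[OF W y] inC[OF W x]] .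
            also have "\<dots> = K2 * norm (h y - h x)" by simp
            also have "\<dots> \<le> K2 * (L_H0 * norm (y - x))"
              using hL x y K2pos unfolding lipschitz_on_def dist_norm by (simp add: mult_left_mono)
            finally show "norm (F' (W, h y) - F' (W, h x)) \<le> K2 * L_H0 * norm (y - x)" by simp
            have "norm (blinfun_apply (H' y) d) \<le> norm (H' y) * norm d" by (rule norm_blinfun)
            also have "\<dots> \<le> Kh * norm d" using Kh[OF y] by (simp add: mult_right_mono)
            finally show "norm (blinfun_apply (H' y) d) \<le> Kh * norm d" .
          qed (use K2pos L0 Khpos in auto)
          finally show ?thesis .
        qed
        have n2: "norm (blinfun_apply (F' (W, h x)) (0, blinfun_apply (H' y - H' x) d))
            \<le> KF * (L_H1 * norm (y - x) * norm d)"
        proof -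
          have "norm (blinfun_apply (F' (W, h x)) (0, blinfun_apply (H' y - H' x) d))
              \<le> norm (F' (W, h x)) * norm (blinfun_apply (H' y - H' x) d)"
            using norm_blinfun[of "F' (W, h x)" "(0, blinfun_apply (H' y - H' x) d)"] by (simp only: norm_Pair1)
          also have "\<dots> \<le> KF * (L_H1 * norm (y - x) * norm d)"
          proof (rule mult_mono)
            show "norm (F' (W, h x)) \<le> KF" using KF[OF inC[OF W x]] .
            have "norm (blinfun_apply (H' y - H' x) d) \<le> norm (H' y - H' x) * norm d" by (rule norm_blinfun)
            also have "\<dots> \<le> (L_H1 * norm (y - x)) * norm d"
              using H'L x y unfolding lipschitz_on_def dist_norm by (simp add: mult_right_mono)
            finally show "norm (blinfun_apply (H' y - H' x) d) \<le> L_H1 * norm (y - x) * norm d" .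
          qed (use KFpos L1 in auto)
          finally show ?thesis .
        qed
        have "\<bar>D W y d - D W x d\<bar> \<le> (K2 * L_H0 * norm (y - x)) * (Kh * norm d) + KF * (L_H1 * norm (y - x) * norm d)"
          unfolding eq using n1 n2 norm_triangle_ineq[of "blinfun_apply (F' (W, h y) - F' (W, h x)) (0, blinfun_apply (H' y) d)"
              "blinfun_apply (F' (W, h x)) (0, blinfun_apply (H' y - H' x) d)"]
          by (simp del: blinfun.diff_left)
        also have "\<dots> = (K2 * L_H0 * Kh + KF * L_H1) * (norm (y - x) * norm d)"
          by (simp add: algebra_simps)
        also have "\<dots> \<le> L * (norm (y - x) * norm d)"
          unfolding L_def by (rule mult_right_mono) auto
        finally show ?thesis by (simp add: mult.assoc)
      qed
    qed
    have "convex_on \<Theta> (\<lambda>\<theta>. (SUP W\<in>\<W>. F (W, h \<theta>)) + L / 2 * (norm \<theta>)^2)"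
    proof (rule convex_on_SUP_family[OF A2_W(2) cvW _ A2_Theta(2)])
      show "bdd_above ((\<lambda>W. F (W, h x)) ` \<W>)" if "x \<in> \<Theta>" for x
        using KF0[OF inC[OF _ that]] by (intro bdd_aboveI2[where M = KF0]) (fastforce simp: abs_le_iff)
    qed
    then show "\<exists>\<rho>h>0. weakly_convex_on \<rho>h \<Theta> (\<lambda>\<theta>. SUP W\<in>\<W>. F (W, H \<theta> (\<omega> \<xi>)))"
      using Lpos unfolding weakly_convex_on_def h_def w_def by blast
  qed
qed

end
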